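(* For all integers $a,b,c,d,e$: $$(F_{d-c}L_{e-b}-F_{e-c}L_{d-b})F_{c-a}=(F_{e-a}F_{d-c}-F_{d-a}F_{e-c})L_{c-b},$$ $$(J_{d-c}j_{e-b}-J_{e-c}j_{d-b})J_{c-a}=(J_{e-a}J_{d-c}-J_{d-a}J_{e-c})j_{c-b},$$ $$(P_{d-c}Q_{e-b}-P_{e-c}Q_{d-b})P_{c-a}=(P_{e-a}P_{d-c}-P_{d-a}P_{e-c})Q_{c-b}.$$
   Context: All sequences are indexed by $n\in\mathbb Z$. Fibonacci numbers $F_n$ and Lucas numbers $L_n$: $F_n=F_{n-1}+F_{n-2}$, $L_n=L_{n-1}+L_{n-2}$ for all $n\in\mathbb Z$, with $F_0=0,F_1=1,L_0=2,L_1=1$ (so $F_{-n}=(-1)^{n-1}F_n$, $L_{-n}=(-1)^nL_n$). Jacobsthal numbers $J_n$ and Jacobsthal–Lucas numbers $j_n$: $J_n=J_{n-1}+2J_{n-2}$, $j_n=j_{n-1}+2j_{n-2}$ for all $n\in\mathbb Z$, with $J_0=0,J_1=1,j_0=2,j_1=1$ (so $J_{-n}=(-1)^{n-1}2^{-n}J_n$, $j_{-n}=(-1)^n2^{-n}j_n$, rational for negative index). Pell numbers $P_n$ and Pell–Lucas numbers $Q_n$: $P_n=2P_{n-1}+P_{n-2}$, $Q_n=2Q_{n-1}+Q_{n-2}$ for all $n\in\mathbb Z$, with $P_0=0,P_1=1,Q_0=2,Q_1=2$ (so $P_{-n}=(-1)^{n-1}P_n$, $Q_{-n}=(-1)^nQ_n$).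 *)

theory Defs
  imports Complex_Main
begin

text \<open>Second-order linear recurrence x n = p * x (n-1) + q * x (n-2) (q nonzero),
  extended to all integer indices. fwd computes indices 0,1,2,...;
  bwd computes indices 0,-1,-2,... via x (n-2) = (x n - p * x (n-1)) / q.\<close>

fun fwd :: "real \<Rightarrow> real \<Rightarrow> real \<Rightarrow> real \<Rightarrow> nat \<Rightarrow> real" where
  "fwd p q x0 x1 0 = x0"
| "fwd p q x0 x1 (Suc 0) = x1"
| "fwd p q x0 x1 (Suc (Suc n)) = p * fwd p q x0 x1 (Suc n) + q * fwd p q x0 x1 n"

fun bwd :: "real \<Rightarrow> real \<Rightarrow> real \<Rightarrow> real \<Rightarrow> nat \<Rightarrow> real" where
  "bwd p q x0 x1 0 = x1"
| "bwd p q x0 x1 (Suc 0) = x0"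
| "bwd p q x0 x1 (Suc (Suc n)) = (bwd p q x0 x1 n - p * bwd p q x0 x1 (Suc n)) / q"
  \<comment> \<open>bwd k is the term of index 1 - k\<close>

definition recseq :: "real \<Rightarrow> real \<Rightarrow> real \<Rightarrow> real \<Rightarrow> int \<Rightarrow> real" where
  "recseq p q x0 x1 n = (if n \<ge> 0 then fwd p q x0 x1 (nat n) else bwd p q x0 x1 (nat (1 - n)))"

definition Fib :: "int \<Rightarrow> real" where "Fib = recseq 1 1 0 1"
definition Luc :: "int \<Rightarrow> real" where "Luc = recseq 1 1 2 1"
definition Jac :: "int \<Rightarrow> real" where "Jac = recseq 1 2 0 1"
definition JacL :: "int \<Rightarrow> real" where "JacL = recseq 1 2 2 1"
definition Pell :: "int \<Rightarrow> real" where "Pell = recseq 2 1 0 1"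
definition PellQ :: "int \<Rightarrow> real" where "PellQ = recseq 2 1 2 2"

end

theory Submission
  imports Defs
begin

lemma recseq_eq:
  assumes q: "q \<noteq> 0" and g0: "g 0 = x0" and g1: "g 1 = x1"
    and rec: "\<And>n. g (n+2) = p * g (n+1) + q * g n"
  shows "recseq p q x0 x1 n = g n"
proof -
  have F: "fwd p q x0 x1 m = g (int m) \<and> fwd p q x0 x1 (Suc m) = g (int (Suc m))" for m
  proof (induction m)
    case 0 then show ?case using g0 g1 by simp
  next
    case (Suc m)
    have "g (int (Suc (Suc m))) = p * g (int (Suc m)) + q * g (int m)"
      using rec[of "int m"] by (simp add: add.commute add.left_commute)
    with Suc show ?case by simp
  qed
  have B: "bwd p q x0 x1 m = g (1 - int m) \<and> bwd p q x0 x1 (Suc m) = g (1 - int (Suc m))" for m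
  proof (induction m)
    case 0 then show ?case using g0 g1 by simp
  next
    case (Suc m)
    have "g (1 - int m) = p * g (1 - int (Suc m)) + q * g (1 - int (Suc (Suc m)))"
      using rec[of "1 - int (Suc (Suc m))"] by (simp add: algebra_simps)
    hence "g (1 - int (Suc (Suc m))) = (g (1 - int m) - p * g (1 - int (Suc m))) / q"
      using q by (simp add: field_simps)
    with Suc show ?case by simp
  qed
  show ?thesis
  proof (cases "n \<ge> 0")
    case True
    then show ?thesis using F[of "nat n"] by (simp add: recseq_def)
  next
    case False
    then show ?thesis using B[of "nat (1 - n)"] by (simp add: recseq_def)
  qed
qed

lemma binet_rec:
  fixes x :: real
  assumes "x \<noteq> 0" "x^2 = p*x + q"
  shows "x powi (n+2) = p * x powi (n+1) + q * x powi n"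
proof -
  have "x powi (n+2) = x powi n * x^2" using assms by (simp add: power_int_add)
  also have "\<dots> = p * (x powi n * x) + q * x powi n" using assms by (simp add: algebra_simps)
  also have "x powi n * x = x powi (n+1)" using assms by (simp add: power_int_add)
  finally show ?thesis .
qed

lemma binet_seq:
  fixes x y :: real
  assumes "x \<noteq> 0" "x^2 = p*x + q" "y \<noteq> 0" "y^2 = p*y + q" "q \<noteq> 0"
    "c1 + c2 = x0" "c1 * x + c2 * y = x1"
  shows "recseq p q x0 x1 n = c1 * x powi n + c2 * y powi n"
  apply (rule recseq_eq)
  using assms binet_rec[of x p q] binet_rec[of y p q] by (auto simp: algebra_simps)

lemma ident:
  fixes x y k :: real
  assumes "x \<noteq> 0" "y \<noteq> 0" "k \<noteq> 0"
  defines "U \<equiv> \<lambda>n. (x powi n - y powi n) / k" and "V \<equiv> \<lambda>n. x powi n + y powi n"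
  shows "(U (d-c) * V (e-b) - U (e-c) * V (d-b)) * U (c-a)
           = (U (e-a) * U (d-c) - U (d-a) * U (e-c)) * V (c-b)"
  unfolding U_def V_def using assms
  by (simp add: power_int_diff field_simps)

lemma s5ne [simp]: "1 + sqrt 5 \<noteq> (0::real)" "1 + sqrt 2 \<noteq> (0::real)"
  by (smt (verit) real_sqrt_ge_zero)+

lemma fib_binet: "Fib = (\<lambda>n. (((1+sqrt 5)/2) powi n - ((1-sqrt 5)/2) powi n) / sqrt 5)"
proof
  fix n
  have s: "sqrt 5 ^ 2 = (5::real)" by simp
  have "Fib n = (1/sqrt 5) * ((1+sqrt 5)/2) powi n + (-1/sqrt 5) * ((1-sqrt 5)/2) powi n"
    unfolding Fib_def by (rule binet_seq) (auto simp: field_simps power2_eq_square s[unfolded power2_eq_square])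
  then show "Fib n = (((1+sqrt 5)/2) powi n - ((1-sqrt 5)/2) powi n) / sqrt 5"
    by (simp add: field_simps)
qed

lemma luc_binet: "Luc = (\<lambda>n. ((1+sqrt 5)/2) powi n + ((1-sqrt 5)/2) powi n)"
proof
  fix n
  have s: "sqrt 5 ^ 2 = (5::real)" by simp
  show "Luc n = ((1+sqrt 5)/2) powi n + ((1-sqrt 5)/2) powi n"
    using binet_seq[of "(1+sqrt 5)/2" 1 1 "(1-sqrt 5)/2" 1 1 2 1 n]
    unfolding Luc_def by (auto simp: field_simps power2_eq_square s[unfolded power2_eq_square])
qed

lemma jac_binet: "Jac = (\<lambda>n. ((2::real) powi n - (-1) powi n) / 3)"
proof
  fix n
  have "Jac n = (1/3) * (2::real) powi n + (-1/3) * (-1) powi n"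
    unfolding Jac_def by (rule binet_seq) (auto simp: power2_eq_square)
  then show "Jac n = ((2::real) powi n - (-1) powi n) / 3" by (simp add: field_simps)
qed

lemma jacl_binet: "JacL = (\<lambda>n. (2::real) powi n + (-1) powi n)"
proof
  fix n
  show "JacL n = (2::real) powi n + (-1) powi n"
    using binet_seq[of 2 1 2 "-1" 1 1 2 1 n] unfolding JacL_def by (auto simp: power2_eq_square)
qed

lemma pell_binet: "Pell = (\<lambda>n. ((1+sqrt 2) powi n - (1-sqrt 2) powi n) / (2*sqrt 2))"
proof
  fix n
  have s: "sqrt 2 * sqrt 2 = (2::real)" by simp
  have "Pell n = (1/(2*sqrt 2)) * (1+sqrt 2) powi n + (-1/(2*sqrt 2)) * (1-sqrt 2) powi n"
    unfolding Pell_def by (rule binet_seq) (auto simp: field_simps power2_eq_square s)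
  then show "Pell n = ((1+sqrt 2) powi n - (1-sqrt 2) powi n) / (2*sqrt 2)"
    by (simp add: field_simps)
qed

lemma pellq_binet: "PellQ = (\<lambda>n. (1+sqrt 2) powi n + (1-sqrt 2) powi n)"
proof
  fix n
  have s: "sqrt 2 * sqrt 2 = (2::real)" by simp
  show "PellQ n = (1+sqrt 2) powi n + (1-sqrt 2) powi n"
    using binet_seq[of "1+sqrt 2" 2 1 "1-sqrt 2" 1 1 2 2 n]
    unfolding PellQ_def by (auto simp: field_simps power2_eq_square s)
qed

theorem corollary1:
  fixes a b c d e :: int
  shows "((Fib (d-c) * Luc (e-b) - Fib (e-c) * Luc (d-b)) * Fib (c-a)
           = (Fib (e-a) * Fib (d-c) - Fib (d-a) * Fib (e-c)) * Luc (c-b)) \<and>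
         ((Jac (d-c) * JacL (e-b) - Jac (e-c) * JacL (d-b)) * Jac (c-a)
           = (Jac (e-a) * Jac (d-c) - Jac (d-a) * Jac (e-c)) * JacL (c-b)) \<and>
         ((Pell (d-c) * PellQ (e-b) - Pell (e-c) * PellQ (d-b)) * Pell (c-a)
           = (Pell (e-a) * Pell (d-c) - Pell (d-a) * Pell (e-c)) * PellQ (c-b))"
proof (intro conjI)
  have n1: "(1 + sqrt 5) / 2 \<noteq> (0::real)" "(1 - sqrt 5) / 2 \<noteq> (0::real)"
    by (auto simp: field_simps)
  show "(Fib (d-c) * Luc (e-b) - Fib (e-c) * Luc (d-b)) * Fib (c-a)
           = (Fib (e-a) * Fib (d-c) - Fib (d-a) * Fib (e-c)) * Luc (c-b)"
    unfolding fib_binet luc_binet using ident[OF n1, of "sqrt 5"] by simp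
  show "(Jac (d-c) * JacL (e-b) - Jac (e-c) * JacL (d-b)) * Jac (c-a)
           = (Jac (e-a) * Jac (d-c) - Jac (d-a) * Jac (e-c)) * JacL (c-b)"
    unfolding jac_binet jacl_binet using ident[of 2 "-1" 3] by simp
  have n2: "1 + sqrt 2 \<noteq> (0::real)" "1 - sqrt 2 \<noteq> (0::real)"
    by (auto simp: field_simps)
  show "(Pell (d-c) * PellQ (e-b) - Pell (e-c) * PellQ (d-b)) * Pell (c-a)
           = (Pell (e-a) * Pell (d-c) - Pell (d-a) * Pell (e-c)) * PellQ (c-b)"
    unfolding pell_binet pellq_binet using ident[OF n2, of "2*sqrt 2"] by simp
qed

end
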